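(* Let $n\ge1$, $0\le k\le n$, and let $\mathfrak{g}$ be of type $A_n$. Then \[ \operatorname{ps}(\omega_n+\omega_k)=q^{\binom n2+\binom k2}\,[n-k+1]_q\begin{bmatrix}n+2\\ k\end{bmatrix}_q, \] where $\omega_0=0$.
   Context: For type $A_n$ ($\mathfrak{sl}_{n+1}$, or $\mathfrak{gl}_{n+1}$ polynomial representations) weights are written in $\epsilon_1,\dots,\epsilon_{n+1}$ with $\omega_k=\epsilon_1+\cdots+\epsilon_k$, so $\operatorname{ch}V(\lambda)$ is the Schur polynomial $s_\lambda(x_1,\dots,x_{n+1})$. The principal specialization is $\operatorname{ps}(\lambda)=s_\lambda(1,q,q^2,\dots,q^n)$. $[j]_q=1+\cdots+q^{j-1}$ and $\begin{bmatrix}a\\ b\end{bmatrix}_q$ is the Gaussian binomial coefficient. *)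

theory Defs
  imports "HOL-Library.FuncSet"
begin

text \<open>Weights of type A_n in epsilon coordinates: lists of length n+1.
  omega n k is the k-th fundamental weight eps_1 + ... + eps_k (omega n 0 = 0).\<close>
definition omega :: "nat \<Rightarrow> nat \<Rightarrow> nat list" where
  "omega n k = replicate k 1 @ replicate (n + 1 - k) 0"

definition wadd :: "nat list \<Rightarrow> nat list \<Rightarrow> nat list" where
  "wadd xs ys = map2 (+) xs ys"

definition young_cells :: "nat list \<Rightarrow> (nat \<times> nat) set" where
  "young_cells lam = {(i, j). i < length lam \<and> j < lam ! i}"

text \<open>Semistandard Young tableaux of shape lam with entries in {0..<N}
  (entry m stands for the variable x_(m+1)).\<close>
definition ssyt :: "nat \<Rightarrow> nat list \<Rightarrow> ((nat \<times> nat) \<Rightarrow> nat) set" where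
  "ssyt N lam = {T \<in> young_cells lam \<rightarrow>\<^sub>E {..<N}.
      (\<forall>i j. (i, j) \<in> young_cells lam \<and> (i, Suc j) \<in> young_cells lam \<longrightarrow> T (i, j) \<le> T (i, Suc j)) \<and>
      (\<forall>i j. (i, j) \<in> young_cells lam \<and> (Suc i, j) \<in> young_cells lam \<longrightarrow> T (i, j) < T (Suc i, j))}"

definition schur :: "nat \<Rightarrow> nat list \<Rightarrow> (nat \<Rightarrow> 'a::comm_semiring_1) \<Rightarrow> 'a" where
  "schur N lam x = (\<Sum>T\<in>ssyt N lam. \<Prod>c\<in>young_cells lam. x (T c))"

definition ps :: "nat \<Rightarrow> nat list \<Rightarrow> 'a::comm_semiring_1 \<Rightarrow> 'a" where
  "ps n lam q = schur (n + 1) lam (\<lambda>m. q ^ m)"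

definition qint :: "'a::comm_semiring_1 \<Rightarrow> nat \<Rightarrow> 'a" where
  "qint q j = (\<Sum>i<j. q ^ i)"

fun gbinom :: "'a::comm_semiring_1 \<Rightarrow> nat \<Rightarrow> nat \<Rightarrow> 'a" where
  "gbinom q a 0 = 1"
| "gbinom q 0 (Suc b) = 0"
| "gbinom q (Suc a) (Suc b) = gbinom q a b + q ^ Suc b * gbinom q a (Suc b)"

end

theory Submission
  imports Defs
begin

lemma qint_0 [simp]: "qint q 0 = 0" by (simp add: qint_def)
lemma qint_1 [simp]: "qint q (Suc 0) = 1" by (simp add: qint_def)
lemma qint_Suc: "qint q (Suc j) = qint q j + q ^ j" by (simp add: qint_def)
lemma qint_Suc2: "qint q (Suc j) = 1 + q * qint q j"
  by (simp add: qint_def sum.lessThan_Suc_shift sum_distrib_left del: sum.lessThan_Suc)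
lemma qint_add: "qint q (a + b) = qint q a + q ^ a * qint q b"
  by (induction b) (simp_all add: qint_Suc algebra_simps power_add)

lemma gb_zero: "a < b \<Longrightarrow> gbinom q a b = 0"
proof (induction a arbitrary: b)
  case 0 then obtain c where "b = Suc c" by (cases b) auto
  then show ?case by simp
next
  case (Suc a) then obtain c where "b = Suc c" by (cases b) auto
  with Suc show ?case by simp
qed

lemma gb_diag: "gbinom q a a = 1" by (induction a) (simp_all add: gb_zero)
lemma gb_one: "gbinom q a (Suc 0) = qint q a" by (induction a) (simp_all add: qint_Suc2)

lemma gb_abs1: "qint q (Suc j) * gbinom q a (Suc j) = qint q (a - j) * gbinom q a j"
proof (induction a arbitrary: j)
  case 0 show ?case by simp
next
  case (Suc a)
  show ?case
  proof (cases j)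
    case 0 then show ?thesis using gb_one[of q "Suc a"] by simp
  next
    case (Suc i)
    note j = this
    have IH1: "qint q (Suc i) * gbinom q a (Suc i) = qint q (a - i) * gbinom q a i" using Suc.IH .
    have IH2: "qint q (Suc (Suc i)) * gbinom q a (Suc (Suc i)) = qint q (a - Suc i) * gbinom q a (Suc i)"
      using Suc.IH .
    show ?thesis
    proof (cases "a \<le> i")
      case True
      then show ?thesis using j by (simp add: gb_zero)
    next
      case False
      define d where "d = a - Suc i"
      have ai: "a - i = Suc d" using False d_def by simp
      have "qint q (Suc j) * gbinom q (Suc a) (Suc j)
          = qint q (Suc (Suc i)) * gbinom q a (Suc i) + q ^ Suc (Suc i) * (qint q (Suc (Suc i)) * gbinom q a (Suc (Suc i)))"
        using j by (simp add: algebra_simps)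
      also have "\<dots> = qint q (Suc (Suc i)) * gbinom q a (Suc i) + q ^ Suc (Suc i) * (qint q d * gbinom q a (Suc i))"
        using IH2 d_def by simp
      also have "\<dots> = qint q (Suc i) * gbinom q a (Suc i) + q ^ Suc i * (qint q (Suc d) * gbinom q a (Suc i))"
        by (simp only: qint_Suc[of q "Suc i"] qint_Suc2[of q d]) (simp add: algebra_simps)
      also have "\<dots> = qint q (Suc d) * gbinom q a i + q ^ Suc i * (qint q (Suc d) * gbinom q a (Suc i))"
        using IH1 ai by simp
      also have "\<dots> = qint q (Suc a - j) * gbinom q (Suc a) j"
        using j ai by (simp add: algebra_simps)
      finally show ?thesis .
    qed
  qed
qed

lemma gb_abs2: "qint q (Suc N) * gbinom q N (Suc k) = qint q (N - k) * gbinom q (Suc N) (Suc k)"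
proof (cases "k < N")
  case False then show ?thesis by (simp add: gb_zero)
next
  case True
  have "qint q (N - k) * gbinom q (Suc N) (Suc k) = qint q (Suc (Suc k)) * gbinom q (Suc N) (Suc (Suc k))"
    using gb_abs1[of q "Suc k" "Suc N"] by simp
  also have "\<dots> = qint q (Suc (Suc k)) * gbinom q N (Suc k) + q ^ Suc (Suc k) * (qint q (Suc (Suc k)) * gbinom q N (Suc (Suc k)))"
    by (simp add: algebra_simps)
  also have "\<dots> = qint q (Suc (Suc k)) * gbinom q N (Suc k) + q ^ Suc (Suc k) * (qint q (N - Suc k) * gbinom q N (Suc k))"
    using gb_abs1[of q "Suc k" N] by simp
  also have "\<dots> = (qint q (Suc (Suc k)) + q ^ Suc (Suc k) * qint q (N - Suc k)) * gbinom q N (Suc k)"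
    by (simp add: algebra_simps)
  also have "qint q (Suc (Suc k)) + q ^ Suc (Suc k) * qint q (N - Suc k) = qint q (Suc N)"
    using qint_add[of q "Suc (Suc k)" "N - Suc k"] True by simp
  finally show ?thesis by simp
qed

lemma choose2_Suc: "Suc k choose 2 = (k choose 2) + k"
  by (simp add: numeral_2_eq_2)


definition SI :: "nat \<Rightarrow> nat \<Rightarrow> (nat \<Rightarrow> nat) set" where
  "SI N k = {g \<in> {..<k} \<rightarrow>\<^sub>E {..<N}. \<forall>i. Suc i < k \<longrightarrow> g i < g (Suc i)}"
definition wt :: "'a::comm_semiring_1 \<Rightarrow> nat \<Rightarrow> (nat \<Rightarrow> nat) \<Rightarrow> 'a" where
  "wt q k g = (\<Prod>i<k. q ^ g i)"
definition esum :: "'a::comm_semiring_1 \<Rightarrow> nat \<Rightarrow> nat \<Rightarrow> 'a" where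
  "esum q N k = (\<Sum>g\<in>SI N k. wt q k g)"
definition qgood :: "nat \<Rightarrow> nat \<Rightarrow> (nat \<Rightarrow> nat) \<Rightarrow> bool" where
  "qgood k m g \<longleftrightarrow> (\<forall>i<k. m \<le> i \<longrightarrow> g i \<noteq> i)"
definition Gs :: "'a::comm_semiring_1 \<Rightarrow> nat \<Rightarrow> nat \<Rightarrow> 'a" where
  "Gs q N k = (\<Sum>g\<in>SI N k. \<Sum>m\<in>{m. m < N \<and> qgood k m g}. q ^ (N - Suc m) * wt q k g)"

lemma mono_gap:
  assumes "\<forall>i. Suc i < L \<longrightarrow> h i < h (Suc i)" "i \<le> j" "j < L"
  shows "h i + (j - i) \<le> h j"
  using assms(2,3)
proof (induction j)
  case 0 then show ?case by simp
next
  case (Suc j)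
  show ?case
  proof (cases "i \<le> j")
    case True
    then have "h i + (j - i) \<le> h j" using Suc by simp
    moreover have "h j < h (Suc j)" using assms(1) Suc.prems by simp
    ultimately show ?thesis using True by simp
  next
    case False then have "i = Suc j" using Suc.prems by simp
    then show ?thesis by simp
  qed
qed

lemma SI_ge: "g \<in> SI N k \<Longrightarrow> i < k \<Longrightarrow> g 0 + i \<le> g i"
  using mono_gap[of k g 0 i] unfolding SI_def by auto

lemma finite_SI: "finite (SI N k)"
  by (rule finite_subset[of _ "{..<k} \<rightarrow>\<^sub>E {..<N}"]) (auto simp: SI_def finite_PiE)

lemma SI_0: "SI N 0 = {\<lambda>_. undefined}" by (auto simp: SI_def)
lemma SI_empty: "SI 0 (Suc k) = {}" by (auto simp: SI_def PiE_eq_empty_iff)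

definition sh :: "nat \<Rightarrow> (nat \<Rightarrow> nat) \<Rightarrow> nat \<Rightarrow> nat" where
  "sh k g = restrict (\<lambda>i. Suc (g i)) {..<k}"
definition ush :: "nat \<Rightarrow> (nat \<Rightarrow> nat) \<Rightarrow> nat \<Rightarrow> nat" where
  "ush k g = restrict (\<lambda>i. g i - 1) {..<k}"
definition c0 :: "nat \<Rightarrow> (nat \<Rightarrow> nat) \<Rightarrow> nat \<Rightarrow> nat" where
  "c0 k g = restrict (\<lambda>i. if i = 0 then 0 else Suc (g (i - 1))) {..<Suc k}"
definition uc0 :: "nat \<Rightarrow> (nat \<Rightarrow> nat) \<Rightarrow> nat \<Rightarrow> nat" where
  "uc0 k g = restrict (\<lambda>i. g (Suc i) - 1) {..<k}"

lemma bij_sh: "bij_betw (sh (Suc k)) (SI N (Suc k)) {g \<in> SI (Suc N) (Suc k). g 0 \<noteq> 0}"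
proof (rule bij_betw_byWitness[where f' = "ush (Suc k)"])
  show "\<forall>a\<in>SI N (Suc k). ush (Suc k) (sh (Suc k) a) = a"
    by (auto simp: SI_def sh_def ush_def fun_eq_iff PiE_iff extensional_def)
  show "\<forall>a'\<in>{g \<in> SI (Suc N) (Suc k). g 0 \<noteq> 0}. sh (Suc k) (ush (Suc k) a') = a'"
  proof
    fix a' assume a: "a' \<in> {g \<in> SI (Suc N) (Suc k). g 0 \<noteq> 0}"
    have "\<And>i. i < Suc k \<Longrightarrow> a' i \<noteq> 0" using SI_ge[of a'] a by fastforce
    then show "sh (Suc k) (ush (Suc k) a') = a'"
      using a by (auto simp: SI_def sh_def ush_def fun_eq_iff PiE_iff extensional_def)
  qed
  show "sh (Suc k) ` SI N (Suc k) \<subseteq> {g \<in> SI (Suc N) (Suc k). g 0 \<noteq> 0}"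
    by (auto simp: SI_def sh_def PiE_iff)
  show "ush (Suc k) ` {g \<in> SI (Suc N) (Suc k). g 0 \<noteq> 0} \<subseteq> SI N (Suc k)"
  proof
    fix x assume "x \<in> ush (Suc k) ` {g \<in> SI (Suc N) (Suc k). g 0 \<noteq> 0}"
    then obtain a' where a: "a' \<in> SI (Suc N) (Suc k)" "a' 0 \<noteq> 0" and x: "x = ush (Suc k) a'" by auto
    have nz: "\<And>i. i < Suc k \<Longrightarrow> a' i \<noteq> 0" using SI_ge[of a'] a by fastforce
    have lt: "\<forall>i<Suc k. a' i - 1 < N"
    proof (intro allI impI)
      fix i assume "i < Suc k"
      then have "a' i < Suc N" "a' i \<noteq> 0" using a(1) nz by (auto simp: SI_def PiE_iff)
      then show "a' i - 1 < N" by arith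
    qed
    have "x \<in> {..<Suc k} \<rightarrow>\<^sub>E {..<N}"
      unfolding x ush_def using lt by auto
    moreover have "\<forall>i. Suc i < Suc k \<longrightarrow> x i < x (Suc i)"
    proof (intro allI impI)
      fix i assume i: "Suc i < Suc k"
      have "a' i < a' (Suc i)" using a(1) i by (auto simp: SI_def)
      moreover have "a' i \<noteq> 0" using nz i by simp
      ultimately show "x i < x (Suc i)" unfolding x ush_def using i by auto
    qed
    ultimately show "x \<in> SI N (Suc k)" by (simp add: SI_def)
  qed
qed


lemma bij_c0: "bij_betw (c0 k) (SI N k) {g \<in> SI (Suc N) (Suc k). g 0 = 0}"
proof (rule bij_betw_byWitness[where f' = "uc0 k"])
  show "\<forall>a\<in>SI N k. uc0 k (c0 k a) = a"
    by (auto simp: SI_def c0_def uc0_def fun_eq_iff PiE_iff extensional_def)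
  show "\<forall>a'\<in>{g \<in> SI (Suc N) (Suc k). g 0 = 0}. c0 k (uc0 k a') = a'"
  proof
    fix a' assume a: "a' \<in> {g \<in> SI (Suc N) (Suc k). g 0 = 0}"
    have nz: "\<And>i. i < k \<Longrightarrow> a' (Suc i) \<noteq> 0" using SI_ge[of a' "Suc N" "Suc k" "Suc i" for i] a by fastforce
    show "c0 k (uc0 k a') = a'"
    proof
      fix i show "c0 k (uc0 k a') i = a' i"
        using a nz[of "i - 1"] by (cases i) (auto simp: SI_def c0_def uc0_def PiE_iff extensional_def)
    qed
  qed
  show "c0 k ` SI N k \<subseteq> {g \<in> SI (Suc N) (Suc k). g 0 = 0}"
  proof
    fix x assume "x \<in> c0 k ` SI N k"
    then obtain a where a: "a \<in> SI N k" and x: "x = c0 k a" by auto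
    have "x \<in> {..<Suc k} \<rightarrow>\<^sub>E {..<Suc N}" using a unfolding x c0_def by (auto simp: SI_def PiE_iff)
    moreover have "\<forall>i. Suc i < Suc k \<longrightarrow> x i < x (Suc i)"
    proof (intro allI impI)
      fix i assume i: "Suc i < Suc k"
      show "x i < x (Suc i)"
      proof (cases i)
        case 0 then show ?thesis using i unfolding x c0_def by simp
      next
        case (Suc j) then show ?thesis using i a unfolding x c0_def by (auto simp: SI_def)
      qed
    qed
    moreover have "x 0 = 0" unfolding x c0_def by simp
    ultimately show "x \<in> {g \<in> SI (Suc N) (Suc k). g 0 = 0}" by (simp add: SI_def)
  qed
  show "uc0 k ` {g \<in> SI (Suc N) (Suc k). g 0 = 0} \<subseteq> SI N k"
  proof
    fix x assume "x \<in> uc0 k ` {g \<in> SI (Suc N) (Suc k). g 0 = 0}"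
    then obtain a' where a: "a' \<in> SI (Suc N) (Suc k)" "a' 0 = 0" and x: "x = uc0 k a'" by auto
    have nz: "\<And>i. i < k \<Longrightarrow> a' (Suc i) \<noteq> 0" using SI_ge[of a' "Suc N" "Suc k" "Suc i" for i] a by fastforce
    have lt: "\<forall>i<k. a' (Suc i) - 1 < N"
    proof (intro allI impI)
      fix i assume "i < k"
      then have "a' (Suc i) < Suc N" "a' (Suc i) \<noteq> 0" using a(1) nz by (auto simp: SI_def PiE_iff)
      then show "a' (Suc i) - 1 < N" by arith
    qed
    have "x \<in> {..<k} \<rightarrow>\<^sub>E {..<N}"
      unfolding x uc0_def using lt by auto
    moreover have "\<forall>i. Suc i < k \<longrightarrow> x i < x (Suc i)"
    proof (intro allI impI)
      fix i assume i: "Suc i < k"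
      have "a' (Suc i) < a' (Suc (Suc i))" using a(1) i by (auto simp: SI_def)
      moreover have "a' (Suc i) \<noteq> 0" using nz i by simp
      ultimately show "x i < x (Suc i)" unfolding x uc0_def using i by auto
    qed
    ultimately show "x \<in> SI N k" by (simp add: SI_def)
  qed
qed

lemma wt_sh: "wt q (Suc k) (sh (Suc k) g) = q ^ Suc k * wt q (Suc k) g"
proof -
  have "wt q (Suc k) (sh (Suc k) g) = (\<Prod>i<Suc k. q * q ^ g i)"
    unfolding wt_def sh_def by (rule prod.cong) auto
  also have "\<dots> = q ^ Suc k * wt q (Suc k) g"
    by (simp add: prod.distrib wt_def del: prod.lessThan_Suc)
  finally show ?thesis .
qed

lemma wt_c0: "wt q (Suc k) (c0 k g) = q ^ k * wt q k g"
proof -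
  have "wt q (Suc k) (c0 k g) = (\<Prod>i<k. q * q ^ g i)"
    unfolding wt_def c0_def prod.lessThan_Suc_shift by simp
  also have "\<dots> = q ^ k * wt q k g"
    by (simp add: prod.distrib wt_def)
  finally show ?thesis .
qed

lemma SI_split: "SI (Suc N) (Suc k) = {g \<in> SI (Suc N) (Suc k). g 0 \<noteq> 0} \<union> {g \<in> SI (Suc N) (Suc k). g 0 = 0}"
  by auto

lemma sum_split:
  "(\<Sum>g\<in>SI (Suc N) (Suc k). F g) = (\<Sum>g\<in>SI N (Suc k). F (sh (Suc k) g)) + (\<Sum>g\<in>SI N k. F (c0 k g))"
proof -
  have "(\<Sum>g\<in>SI (Suc N) (Suc k). F g) = (\<Sum>g\<in>{g \<in> SI (Suc N) (Suc k). g 0 \<noteq> 0}. F g) + (\<Sum>g\<in>{g \<in> SI (Suc N) (Suc k). g 0 = 0}. F g)"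
    by (subst SI_split, rule sum.union_disjoint) (auto intro: finite_subset[OF _ finite_SI])
  also have "(\<Sum>g\<in>{g \<in> SI (Suc N) (Suc k). g 0 \<noteq> 0}. F g) = (\<Sum>g\<in>SI N (Suc k). F (sh (Suc k) g))"
    using sum.reindex_bij_betw[OF bij_sh, of F] by simp
  also have "(\<Sum>g\<in>{g \<in> SI (Suc N) (Suc k). g 0 = 0}. F g) = (\<Sum>g\<in>SI N k. F (c0 k g))"
    using sum.reindex_bij_betw[OF bij_c0, of F] by simp
  finally show ?thesis .
qed

lemma esum_rec: "esum q (Suc N) (Suc k) = q ^ Suc k * esum q N (Suc k) + q ^ k * esum q N k"
  unfolding esum_def sum_split wt_sh wt_c0 by (simp add: sum_distrib_left)

lemma esum_formula: "esum q N k = q ^ (k choose 2) * gbinom q N k"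
proof (induction N arbitrary: k)
  case 0 then show ?case by (cases k) (auto simp: esum_def SI_0 SI_empty wt_def binomial_eq_0)
next
  case (Suc N) then show ?case
  proof (cases k)
    case 0 then show ?thesis by (auto simp: esum_def SI_0 wt_def binomial_eq_0)
  next
    case (Suc j)
    then show ?thesis using Suc.IH esum_rec[of q N j]
      by (simp add: choose2_Suc power_add algebra_simps)
  qed
qed


lemma qint_rev: "(\<Sum>m<N. q ^ (N - Suc m)) = qint q N"
  unfolding qint_def by (rule sum.nat_diff_reindex)

lemma good_sh:
  assumes "g \<in> SI N (Suc k)"
  shows "{m. m < Suc N \<and> qgood (Suc k) m (sh (Suc k) g)} = {..<Suc N}"
proof -
  have "\<And>i. i < Suc k \<Longrightarrow> sh (Suc k) g i \<noteq> i"
    using SI_ge[OF assms] unfolding sh_def by fastforce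
  then show ?thesis by (auto simp: qgood_def)
qed

lemma good_c0:
  "{m. m < Suc N \<and> qgood (Suc k) m (c0 k g)} = Suc ` {m. m < N \<and> qgood k m g}"
proof (intro set_eqI iffI)
  fix m assume m: "m \<in> {m. m < Suc N \<and> qgood (Suc k) m (c0 k g)}"
  have "m \<noteq> 0"
  proof
    assume "m = 0"
    then have "c0 k g 0 \<noteq> 0" using m by (auto simp: qgood_def)
    then show False by (simp add: c0_def)
  qed
  then obtain m' where mm: "m = Suc m'" by (cases m) auto
  have "qgood k m' g"
    unfolding qgood_def
  proof (intro allI impI)
    fix i assume "i < k" "m' \<le> i"
    then have "c0 k g (Suc i) \<noteq> Suc i" using m mm by (auto simp: qgood_def)
    then show "g i \<noteq> i" using \<open>i < k\<close> by (simp add: c0_def)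
  qed
  then show "m \<in> Suc ` {m. m < N \<and> qgood k m g}" using m mm by auto
next
  fix m assume "m \<in> Suc ` {m. m < N \<and> qgood k m g}"
  then obtain m' where mm: "m = Suc m'" and m': "m' < N" "qgood k m' g" by auto
  have "qgood (Suc k) m (c0 k g)"
    unfolding qgood_def
  proof (intro allI impI)
    fix i assume i: "i < Suc k" "m \<le> i"
    then obtain i' where ii: "i = Suc i'" using mm by (cases i) auto
    then have "g i' \<noteq> i'" using m' i mm by (auto simp: qgood_def)
    then show "c0 k g i \<noteq> i" using i ii by (simp add: c0_def)
  qed
  then show "m \<in> {m. m < Suc N \<and> qgood (Suc k) m (c0 k g)}" using mm m' by auto
qed

lemma Gs_rec: "Gs q (Suc N) (Suc k) = qint q (Suc N) * q ^ Suc k * esum q N (Suc k) + q ^ k * Gs q N k"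
proof -
  have "Gs q (Suc N) (Suc k) =
     (\<Sum>g\<in>SI N (Suc k). \<Sum>m\<in>{m. m < Suc N \<and> qgood (Suc k) m (sh (Suc k) g)}. q ^ (Suc N - Suc m) * wt q (Suc k) (sh (Suc k) g))
   + (\<Sum>g\<in>SI N k. \<Sum>m\<in>{m. m < Suc N \<and> qgood (Suc k) m (c0 k g)}. q ^ (Suc N - Suc m) * wt q (Suc k) (c0 k g))"
    unfolding Gs_def by (rule sum_split)
  also have "(\<Sum>g\<in>SI N (Suc k). \<Sum>m\<in>{m. m < Suc N \<and> qgood (Suc k) m (sh (Suc k) g)}. q ^ (Suc N - Suc m) * wt q (Suc k) (sh (Suc k) g))
      = (\<Sum>g\<in>SI N (Suc k). qint q (Suc N) * q ^ Suc k * wt q (Suc k) g)"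
  proof (rule sum.cong[OF refl])
    fix g assume g: "g \<in> SI N (Suc k)"
    have "(\<Sum>m\<in>{m. m < Suc N \<and> qgood (Suc k) m (sh (Suc k) g)}. q ^ (Suc N - Suc m) * wt q (Suc k) (sh (Suc k) g))
        = (\<Sum>m<Suc N. q ^ (Suc N - Suc m)) * (q ^ Suc k * wt q (Suc k) g)"
      unfolding good_sh[OF g] wt_sh by (simp add: sum_distrib_right del: sum.lessThan_Suc)
    also have "\<dots> = qint q (Suc N) * q ^ Suc k * wt q (Suc k) g"
      unfolding qint_rev by (simp add: mult.assoc)
    finally show "(\<Sum>m\<in>{m. m < Suc N \<and> qgood (Suc k) m (sh (Suc k) g)}. q ^ (Suc N - Suc m) * wt q (Suc k) (sh (Suc k) g))
        = qint q (Suc N) * q ^ Suc k * wt q (Suc k) g" .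
  qed
  also have "(\<Sum>g\<in>SI N k. \<Sum>m\<in>{m. m < Suc N \<and> qgood (Suc k) m (c0 k g)}. q ^ (Suc N - Suc m) * wt q (Suc k) (c0 k g))
      = (\<Sum>g\<in>SI N k. q ^ k * (\<Sum>m\<in>{m. m < N \<and> qgood k m g}. q ^ (N - Suc m) * wt q k g))"
  proof (rule sum.cong[OF refl])
    fix g assume g: "g \<in> SI N k"
    show "(\<Sum>m\<in>{m. m < Suc N \<and> qgood (Suc k) m (c0 k g)}. q ^ (Suc N - Suc m) * wt q (Suc k) (c0 k g))
      = q ^ k * (\<Sum>m\<in>{m. m < N \<and> qgood k m g}. q ^ (N - Suc m) * wt q k g)"
      unfolding good_c0 wt_c0 by (subst sum.reindex) (auto simp: sum_distrib_left algebra_simps)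
  qed
  finally show ?thesis
    by (simp add: Gs_def esum_def sum_distrib_left mult.assoc)
qed

lemma Gs_formula: "Gs q N k = q ^ (k choose 2) * qint q (N - k) * gbinom q (Suc N) k"
proof (induction N arbitrary: k)
  case 0 then show ?case by (cases k) (auto simp: Gs_def SI_0 SI_empty wt_def binomial_eq_0 qgood_def)
next
  case (Suc N) then show ?case
  proof (cases k)
    case 0 then show ?thesis
      using qint_rev[of q "Suc N"] by (simp add: Gs_def SI_0 wt_def binomial_eq_0 qgood_def lessThan_def del: sum.lessThan_Suc)
  next
    case (Suc j)
    have ab: "qint q (Suc N) * gbinom q N (Suc j) = qint q (N - j) * gbinom q (Suc N) (Suc j)"
      by (rule gb_abs2)
    have "Gs q (Suc N) k = qint q (Suc N) * q ^ Suc j * (q ^ (Suc j choose 2) * gbinom q N (Suc j))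
        + q ^ j * (q ^ (j choose 2) * qint q (N - j) * gbinom q (Suc N) j)"
      using Suc Gs_rec[of q N j] Suc.IH esum_formula[of q N "Suc j"] by simp
    also have "\<dots> = q ^ Suc j * q ^ (Suc j choose 2) * (qint q (Suc N) * gbinom q N (Suc j))
        + q ^ j * (q ^ (j choose 2) * qint q (N - j) * gbinom q (Suc N) j)"
      by (simp add: algebra_simps)
    also have "\<dots> = q ^ (k choose 2) * qint q (Suc N - k) * gbinom q (Suc (Suc N)) k"
      unfolding ab using Suc by (simp add: choose2_Suc power_add algebra_simps)
    finally show ?thesis .
  qed
qed


definition cellsA :: "nat \<Rightarrow> nat \<Rightarrow> (nat \<times> nat) set" where
  "cellsA n k = {(i, j). (j = 0 \<and> i < n) \<or> (j = Suc 0 \<and> i < k)}"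
definition fm :: "nat \<Rightarrow> nat \<Rightarrow> nat" where
  "fm m i = (if i < m then i else Suc i)"
definition Phi :: "nat \<Rightarrow> nat \<Rightarrow> (nat \<Rightarrow> nat) \<times> nat \<Rightarrow> (nat \<times> nat \<Rightarrow> nat)" where
  "Phi n k = (\<lambda>(g, m). restrict (\<lambda>(i, j). if j = 0 then fm m i else g i) (cellsA n k))"
definition SS :: "nat \<Rightarrow> nat \<Rightarrow> ((nat \<Rightarrow> nat) \<times> nat) set" where
  "SS n k = (SIGMA g:SI (Suc n) k. {m. m < Suc n \<and> qgood k m g})"

lemma young_eq:
  assumes "k \<le> n"
  shows "young_cells (wadd (omega n n) (omega n k)) = cellsA n k"
proof -
  have len: "length (wadd (omega n n) (omega n k)) = Suc n"
    by (simp add: wadd_def omega_def)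
  have nth: "wadd (omega n n) (omega n k) ! i = (if i < n then 1 else 0) + (if i < k then 1 else 0)"
    if "i < Suc n" for i
    using that assms by (simp add: wadd_def omega_def nth_append)
  show ?thesis
    unfolding young_cells_def cellsA_def len using nth assms by (auto split: if_splits)
qed

lemma sum_fm: "(\<Sum>i<n. fm m i) = (n choose 2) + (n - m)"
  by (induction n) (auto simp: fm_def choose2_Suc)

lemma cells_split: "cellsA n k = (\<lambda>i. (i, 0)) ` {..<n} \<union> (\<lambda>i. (i, Suc 0)) ` {..<k}"
  by (auto simp: cellsA_def)

lemma weight_Phi:
  assumes "m \<le> n"
  shows "(\<Prod>c\<in>cellsA n k. q ^ Phi n k (g, m) c) = q ^ (n choose 2) * (q ^ (n - m) * wt q k g)"
proof -
  have "(\<Prod>c\<in>cellsA n k. q ^ Phi n k (g, m) c)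
     = (\<Prod>c\<in>(\<lambda>i. (i, 0)) ` {..<n}. q ^ Phi n k (g, m) c) * (\<Prod>c\<in>(\<lambda>i. (i, Suc 0)) ` {..<k}. q ^ Phi n k (g, m) c)"
    unfolding cells_split by (rule prod.union_disjoint) auto
  also have "(\<Prod>c\<in>(\<lambda>i. (i, 0)) ` {..<n}. q ^ Phi n k (g, m) c) = (\<Prod>i<n. q ^ fm m i)"
    by (subst prod.reindex) (auto simp: inj_on_def Phi_def cellsA_def)
  also have "\<dots> = q ^ (\<Sum>i<n. fm m i)" by (simp add: power_sum)
  also have "(\<Prod>c\<in>(\<lambda>i. (i, Suc 0)) ` {..<k}. q ^ Phi n k (g, m) c) = wt q k g"
    by (subst prod.reindex) (auto simp: inj_on_def Phi_def cellsA_def wt_def)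
  finally show ?thesis by (simp only: sum_fm power_add mult.assoc)
qed


lemma Phi_0: "i < n \<Longrightarrow> Phi n k (g, m) (i, 0) = fm m i"
  by (simp add: Phi_def cellsA_def)
lemma Phi_1: "i < k \<Longrightarrow> Phi n k (g, m) (i, Suc 0) = g i"
  by (simp add: Phi_def cellsA_def)

lemma Phi_neq:
  assumes "m < m'" "m' \<le> n"
  shows "Phi n k (g, m) \<noteq> Phi n k (g', m')"
proof
  assume eq: "Phi n k (g, m) = Phi n k (g', m')"
  have "m < n" using assms by simp
  then have "Phi n k (g, m) (m, 0) = Suc m" "Phi n k (g', m') (m, 0) = m"
    using assms by (simp_all add: Phi_0 fm_def)
  then show False using eq by simp
qed

lemma inj_Phi: "inj_on (Phi n k) (SS n k)"
proof (rule inj_onI)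
  fix x y assume x: "x \<in> SS n k" and y: "y \<in> SS n k" and eq: "Phi n k x = Phi n k y"
  obtain g m where xg: "x = (g, m)" by (cases x)
  obtain g' m' where yg: "y = (g', m')" by (cases y)
  have gs: "g \<in> SI (Suc n) k" "g' \<in> SI (Suc n) k" "m < Suc n" "m' < Suc n"
    using x y xg yg by (auto simp: SS_def)
  have "m = m'"
  proof (rule ccontr)
    assume "m \<noteq> m'"
    then have "m < m' \<or> m' < m" by arith
    then show False using Phi_neq[of m m' n k g g'] Phi_neq[of m' m n k g' g] gs eq xg yg by auto
  qed
  moreover have "g = g'"
  proof (rule extensionalityI[of _ "{..<k}"])
    show "g \<in> extensional {..<k}" "g' \<in> extensional {..<k}" using gs by (auto simp: SI_def PiE_iff)
    fix i assume "i \<in> {..<k}"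
    then show "g i = g' i" using eq xg yg Phi_1[of i k n g m] Phi_1[of i k n g' m'] by (metis lessThan_iff)
  qed
  ultimately show "x = y" using xg yg by simp
qed

lemma Phi_in:
  assumes "k \<le> n" "x \<in> SS n k"
  shows "Phi n k x \<in> ssyt (Suc n) (wadd (omega n n) (omega n k))"
proof -
  obtain g m where xg: "x = (g, m)" by (cases x)
  have g: "g \<in> SI (Suc n) k" and m: "m < Suc n" and gd: "qgood k m g"
    using assms(2) xg by (auto simp: SS_def)
  have A1: "\<forall>i<k. fm m i \<le> g i"
  proof (intro allI impI)
    fix i assume i: "i < k"
    have "i \<le> g i" using SI_ge[OF g i] by simp
    moreover have "m \<le> i \<Longrightarrow> g i \<noteq> i" using gd i by (simp add: qgood_def)
    ultimately show "fm m i \<le> g i" by (auto simp: fm_def)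
  qed
  have A2: "\<forall>i. Suc i < n \<longrightarrow> fm m i < fm m (Suc i)" by (simp add: fm_def)
  have A3: "\<forall>i. Suc i < k \<longrightarrow> g i < g (Suc i)" using g by (simp add: SI_def)
  have A4: "\<forall>i<n. fm m i < Suc n" by (simp add: fm_def)
  have A5: "\<forall>i<k. g i < Suc n" using g by (auto simp: SI_def PiE_iff)
  have P: "Phi n k x \<in> cellsA n k \<rightarrow>\<^sub>E {..<Suc n}"
    unfolding xg Phi_def using A4 A5 by (auto simp: cellsA_def)
  have R: "\<forall>i j. (i, j) \<in> cellsA n k \<and> (i, Suc j) \<in> cellsA n k \<longrightarrow> Phi n k x (i, j) \<le> Phi n k x (i, Suc j)"
    unfolding xg using A1 assms(1) by (auto simp: cellsA_def Phi_0 Phi_1)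
  have C: "\<forall>i j. (i, j) \<in> cellsA n k \<and> (Suc i, j) \<in> cellsA n k \<longrightarrow> Phi n k x (i, j) < Phi n k x (Suc i, j)"
    unfolding xg using A2 A3 by (auto simp: cellsA_def Phi_0 Phi_1)
  show ?thesis using P R C by (simp add: ssyt_def young_eq[OF assms(1)])
qed


lemma Phi_surj:
  assumes kn: "k \<le> n" and T: "T \<in> ssyt (Suc n) (wadd (omega n n) (omega n k))"
  shows "T \<in> Phi n k ` SS n k"
proof -
  have TP: "T \<in> cellsA n k \<rightarrow>\<^sub>E {..<Suc n}"
    and row: "\<forall>i j. (i, j) \<in> cellsA n k \<and> (i, Suc j) \<in> cellsA n k \<longrightarrow> T (i, j) \<le> T (i, Suc j)"
    and col: "\<forall>i j. (i, j) \<in> cellsA n k \<and> (Suc i, j) \<in> cellsA n k \<longrightarrow> T (i, j) < T (Suc i, j)"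
    using T by (simp_all add: ssyt_def young_eq[OF kn])
  have rowk: "\<And>i. i < k \<Longrightarrow> T (i, 0) \<le> T (i, Suc 0)"
    using row kn by (auto simp: cellsA_def)
  have col0: "\<forall>i. Suc i < n \<longrightarrow> T (i, 0) < T (Suc i, 0)"
    using col by (auto simp: cellsA_def)
  have col1: "\<forall>i. Suc i < k \<longrightarrow> T (i, Suc 0) < T (Suc i, Suc 0)"
    using col by (auto simp: cellsA_def)
  have v0: "\<And>i. i < n \<Longrightarrow> T (i, 0) < Suc n" using TP by (auto simp: cellsA_def PiE_iff)
  have v1: "\<And>i. i < k \<Longrightarrow> T (i, Suc 0) < Suc n" using TP by (auto simp: cellsA_def PiE_iff)
  define f where "f i = T (i, 0)" for i
  have fmono: "\<forall>i. Suc i < n \<longrightarrow> f i < f (Suc i)" using col0 by (simp add: f_def)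
  have f_ge: "i \<le> f i" if "i < n" for i
    using mono_gap[OF fmono, of 0 i] that by simp
  have f_le: "f i \<le> Suc i" if "i < n" for i
  proof -
    have "f i + (n - 1 - i) \<le> f (n - 1)" using mono_gap[OF fmono, of i "n - 1"] that by simp
    moreover have "f (n - 1) \<le> n" using v0[of "n - 1"] that by (simp add: f_def)
    ultimately show ?thesis using that by arith
  qed
  define m where "m = (LEAST m. m = n \<or> f m \<noteq> m)"
  have mn: "m \<le> n" unfolding m_def by (rule Least_le) simp
  have below: "f i = i" if "i < m" for i
    using not_less_Least[OF that[unfolded m_def]] by simp
  have atm: "f m \<noteq> m" if "m < n"
    using LeastI[of "\<lambda>m. m = n \<or> f m \<noteq> m" n] that unfolding m_def by auto
  have fi: "f i = fm m i" if "i < n" for i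
  proof (cases "i < m")
    case True then show ?thesis using below by (simp add: fm_def)
  next
    case False
    then have mlt: "m < n" using that by simp
    have fmm: "f m = Suc m" using atm[OF mlt] f_ge[OF mlt] f_le[OF mlt] by simp
    have "f m + (i - m) \<le> f i" using mono_gap[OF fmono, of m i] False that by simp
    then show ?thesis using f_le[OF that] fmm False by (simp add: fm_def)
  qed
  define g where "g = restrict (\<lambda>i. T (i, Suc 0)) {..<k}"
  have gSI: "g \<in> SI (Suc n) k"
    using v1 col1 by (auto simp: SI_def g_def)
  have gd: "qgood k m g"
    unfolding qgood_def
  proof (intro allI impI)
    fix i assume i: "i < k" "m \<le> i"
    have "fm m i = Suc i" using i by (simp add: fm_def)
    then have "T (i, 0) = Suc i" using fi[of i] i kn by (simp add: f_def)
    then show "g i \<noteq> i" using rowk[OF i(1)] i by (simp add: g_def)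
  qed
  have inSS: "(g, m) \<in> SS n k" using gSI gd mn by (simp add: SS_def)
  have "T = Phi n k (g, m)"
  proof (rule extensionalityI[of _ "cellsA n k"])
    show "T \<in> extensional (cellsA n k)" using TP by (simp add: PiE_iff)
    show "Phi n k (g, m) \<in> extensional (cellsA n k)" by (simp add: Phi_def)
    fix c assume c: "c \<in> cellsA n k"
    then obtain i j where cij: "c = (i, j)" "(j = 0 \<and> i < n) \<or> (j = Suc 0 \<and> i < k)"
      by (auto simp: cellsA_def)
    then show "T c = Phi n k (g, m) c"
      using fi by (auto simp: Phi_0 Phi_1 f_def g_def)
  qed
  then show ?thesis using inSS by blast
qed

theorem proposition5p25:
  fixes n k :: nat and q :: "'a::comm_ring_1"
  assumes "1 \<le> n" and "k \<le> n"
  shows "ps n (wadd (omega n n) (omega n k)) q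
         = q ^ ((n choose 2) + (k choose 2)) * qint q (n - k + 1) * gbinom q (n + 2) k"
proof -
  let ?lam = "wadd (omega n n) (omega n k)"
  have S: "ssyt (Suc n) ?lam = Phi n k ` SS n k"
    using Phi_surj[OF assms(2)] Phi_in[OF assms(2)] by blast
  have fin: "finite (SI (Suc n) k)" by (rule finite_SI)
  have "ps n ?lam q = (\<Sum>T\<in>Phi n k ` SS n k. \<Prod>c\<in>cellsA n k. q ^ T c)"
    by (simp add: ps_def schur_def S young_eq[OF assms(2)])
  also have "\<dots> = (\<Sum>x\<in>SS n k. \<Prod>c\<in>cellsA n k. q ^ Phi n k x c)"
    by (subst sum.reindex[OF inj_Phi]) simp
  also have "\<dots> = (\<Sum>x\<in>SS n k. q ^ (n choose 2) * (q ^ (n - snd x) * wt q k (fst x)))"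
    by (rule sum.cong[OF refl]) (auto simp: SS_def weight_Phi)
  also have "\<dots> = (\<Sum>g\<in>SI (Suc n) k. \<Sum>m\<in>{m. m < Suc n \<and> qgood k m g}. q ^ (n choose 2) * (q ^ (n - m) * wt q k g))"
    unfolding SS_def using fin by (subst sum.Sigma) (auto simp: split_beta)
  also have "\<dots> = q ^ (n choose 2) * Gs q (Suc n) k"
    by (simp add: Gs_def sum_distrib_left)
  also have "\<dots> = q ^ ((n choose 2) + (k choose 2)) * qint q (n - k + 1) * gbinom q (n + 2) k"
    using assms(2) by (simp add: Gs_formula power_add Suc_diff_le algebra_simps)
  finally show ?thesis .
qed

end
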